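(* Let $n\ge 1$, $V=\mathbb F_2^n$, and let $\rho\in\mathrm{Sym}(V)\setminus\mathrm{AGL}(V)$ with $0\rho=0$. Let $\overline\rho\in\mathrm{Sym}(V\times V)$ be the map $(x,y)\overline\rho=(x+y,\ y+(x+y)\rho)$. Let $U\le V\times V$ be a subgroup, and suppose there are subgroups $A,B,C,D\le V$ and a group homomorphism $\varphi:A\to C$ such that $$U=\{(a,\ a\varphi+d)\mid a\in A,\ d\in D\}.$$ Assume that $U$ is a linear block for $\overline\rho$. Then: (1) $D\le A$; (2) $A\varphi\le A$; (3) $D\varphi\le D$.
   Context: Maps act on the right: $x\rho$ denotes the image of $x$ under $\rho$, and $fg$ means first $f$ then $g$. $\mathrm{Sym}(V)$ is the symmetric group on $V$, $\mathrm{AGL}(V)$ the group of affine permutations of $V$. A subgroup $U\le V\times V$ is a linear block for $f\in\mathrm{Sym}(V\times V)$ if for every $(v,w)\in V\times V$ there exists $(v',w')\in V\times V$ with $(U+(v,w))f=U+(v',w')$ (equivalently $(v',w')=(v,w)f$). The map $\overline\rho$ is a bijection with inverse $(x,y)\overline\rho^{-1}=(x+y+x\rho,\ y+x\rho)$. *)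

theory Defs
  imports "HOL-Analysis.Analysis" "HOL-Library.Z2"
begin

text \<open>V = F_2^n is modelled as the type bit ^ 'n, with n = CARD('n) >= 1.\<close>

type_synonym 'n F2vec = "bit ^ 'n"

definition add_subgroup :: "'a::ab_group_add set \<Rightarrow> bool" where
  "add_subgroup S \<longleftrightarrow> 0 \<in> S \<and> (\<forall>x\<in>S. \<forall>y\<in>S. x + y \<in> S) \<and> (\<forall>x\<in>S. - x \<in> S)"

definition f2_linear :: "('n::finite F2vec \<Rightarrow> 'n F2vec) \<Rightarrow> bool" where
  "f2_linear L \<longleftrightarrow> (\<forall>x y. L (x + y) = L x + L y) \<and>
     (\<forall>(c::bit) x. L (\<chi> i. c * x $ i) = (\<chi> i. c * L x $ i))"

definition AGL :: "('n::finite F2vec \<Rightarrow> 'n F2vec) set" where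
  "AGL = {f. bij f \<and> (\<exists>L c. f2_linear L \<and> (\<forall>x. f x = L x + c))}"

definition rho_bar :: "('n::finite F2vec \<Rightarrow> 'n F2vec) \<Rightarrow> 'n F2vec \<times> 'n F2vec \<Rightarrow> 'n F2vec \<times> 'n F2vec" where
  "rho_bar \<rho> = (\<lambda>(x, y). (x + y, y + \<rho> (x + y)))"

definition linear_block :: "'a::ab_group_add set \<Rightarrow> ('a \<Rightarrow> 'a) \<Rightarrow> bool" where
  "linear_block U f \<longleftrightarrow> (\<forall>p. \<exists>q. f ` ((\<lambda>u. u + p) ` U) = (\<lambda>u. u + q) ` U)"

end

theory Submission
  imports Defs
begin

lemma bit_UNIV: "(UNIV :: bit set) = {0,1}"
  by (auto intro: bit_not_zero_iff[THEN iffD1])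

instance bit :: finite
  by standard (simp add: bit_UNIV)

lemma bit_self_add: "(b::bit) + b = 0"
  by (cases b) simp_all

lemma vec_self_add: "(x::'n::finite F2vec) + x = 0"
  by (simp add: vec_eq_iff bit_self_add)

lemma vec_minus_eq_plus: "(x::'n::finite F2vec) - y = x + y"
proof -
  have "x - y = x + y + (- y - y)" by (simp add: algebra_simps)
  also have "- y - y = - (y + y)" by simp
  also have "\<dots> = 0" by (simp add: vec_self_add)
  finally show ?thesis by simp
qed

lemma fca: "(f ^^ a) ((f ^^ b) x) = (f ^^ (a + b)) x"
  by (simp add: funpow_add)

lemma fpe: "a = b \<Longrightarrow> (f ^^ a) x = (f ^^ b) x"
  by simp

lemma back_closure:
  fixes \<psi> :: "'n::finite F2vec \<Rightarrow> 'n F2vec"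
  assumes psiA: "\<forall>x\<in>A. \<psi> x \<in> A"
    and psi_add: "\<forall>x\<in>A. \<forall>y\<in>A. \<psi> (x + y) = \<psi> x + \<psi> y"
    and A_sub: "add_subgroup A"
    and DA: "D \<subseteq> A"
    and D_sub: "add_subgroup D"
    and bk: "\<forall>x\<in>A. \<psi> x \<in> D \<longrightarrow> x \<in> D"
    and dD: "d \<in> D"
  shows "\<psi> d \<in> D"
proof -
  have D0: "0 \<in> D" and Dadd: "\<And>x y. x \<in> D \<Longrightarrow> y \<in> D \<Longrightarrow> x + y \<in> D"
    using D_sub unfolding add_subgroup_def by auto
  have itA: "\<And>x. x \<in> A \<Longrightarrow> (\<psi> ^^ k) x \<in> A" for k
    by (induction k) (auto simp: psiA)
  have itadd: "\<And>x y. x \<in> A \<Longrightarrow> y \<in> A \<Longrightarrow> (\<psi> ^^ k) (x + y) = (\<psi> ^^ k) x + (\<psi> ^^ k) y" for k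
    by (induction k) (auto simp: psi_add itA)
  have itback: "\<And>x. x \<in> A \<Longrightarrow> (\<psi> ^^ k) x \<in> D \<Longrightarrow> x \<in> D" for k
  proof (induction k)
    case 0 then show ?case by simp
  next
    case (Suc k)
    have "(\<psi> ^^ k) (\<psi> x) \<in> D" using Suc.prems(2) by (simp add: funpow_Suc_right del: funpow.simps)
    then have "\<psi> x \<in> D" using Suc.IH psiA Suc.prems(1) by blast
    then show ?case using bk Suc.prems(1) by blast
  qed
  have dA: "d \<in> A" using DA dD by auto
  have "\<not> inj (\<lambda>k::nat. (\<psi> ^^ k) d)"
  proof
    assume "inj (\<lambda>k::nat. (\<psi> ^^ k) d)"
    then have "infinite (range (\<lambda>k::nat. (\<psi> ^^ k) d))"
      using finite_imageD by blast
    then show False using finite by blast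
  qed
  then obtain m m' where mm: "m \<noteq> m'" "(\<psi> ^^ m) d = (\<psi> ^^ m') d"
    unfolding inj_def by blast
  have "\<exists>m p. p \<ge> 1 \<and> (\<psi> ^^ (m + p)) d = (\<psi> ^^ m) d"
  proof (cases "m < m'")
    case True
    then show ?thesis using mm by (intro exI[of _ m] exI[of _ "m' - m"]) auto
  next
    case False
    then show ?thesis using mm by (intro exI[of _ m'] exI[of _ "m - m'"]) auto
  qed
  then obtain m p where p1: "p \<ge> 1" and per: "(\<psi> ^^ (m + p)) d = (\<psi> ^^ m) d"
    by blast
  have perj: "(\<psi> ^^ (j + q * p)) d = (\<psi> ^^ j) d" if "j \<ge> m" for j q
  proof (induction q)
    case 0 then show ?case by simp
  next
    case (Suc q)
    have "(\<psi> ^^ (j + Suc q * p)) d = (\<psi> ^^ (j - m)) ((\<psi> ^^ (m + p)) ((\<psi> ^^ (q * p)) d))"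
      by (simp only: fca, rule fpe) (use that in simp)
    also have "(\<psi> ^^ (m + p)) ((\<psi> ^^ (q * p)) d) = (\<psi> ^^ (q*p)) ((\<psi> ^^ (m + p)) d)"
      by (simp only: fca, rule fpe) simp
    also have "\<dots> = (\<psi> ^^ (q*p)) ((\<psi> ^^ m) d)" using per by simp
    also have "(\<psi> ^^ (j - m)) \<dots> = (\<psi> ^^ (j + q * p)) d"
      by (simp only: fca, rule fpe) (use that in simp)
    finally show ?case using Suc.IH by simp
  qed
  define K where "K = (m + 1) * p"
  have Km: "K \<ge> m + 1" unfolding K_def using mult_le_mono2[OF p1, of "m+1"] by simp
  have KK: "(\<psi> ^^ (K + K)) d = (\<psi> ^^ K) d"
    using perj[of K "m+1"] Km unfolding K_def by simp
  have z0: "(\<psi> ^^ (m+1)) (\<psi> d + (\<psi> ^^ (K + 1)) d) = 0"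
  proof -
    have "(\<psi> ^^ (m+1)) (\<psi> d + (\<psi> ^^ (K + 1)) d) = (\<psi> ^^ (m+1)) (\<psi> d) + (\<psi> ^^ (m+1)) ((\<psi> ^^ (K + 1)) d)"
      using itadd psiA dA itA by blast
    also have "(\<psi> ^^ (m+1)) ((\<psi> ^^ (K + 1)) d) = (\<psi> ^^ ((m+1+1) + (m+1) * p)) d"
      unfolding K_def by (simp only: fca, rule fpe) simp
    also have "\<dots> = (\<psi> ^^ (m+1+1)) d" by (rule perj) simp
    also have "(\<psi> ^^ (m+1)) (\<psi> d) = (\<psi> ^^ (m+1+1)) d"
      by (simp add: funpow_Suc_right del: funpow.simps)
    finally show ?thesis by (simp add: vec_self_add)
  qed
  have Aadd: "\<And>x y. x \<in> A \<Longrightarrow> y \<in> A \<Longrightarrow> x + y \<in> A"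
    using A_sub unfolding add_subgroup_def by auto
  have pdA: "\<psi> d \<in> A" and xA: "(\<psi> ^^ (K + 1)) d \<in> A" and KdA: "(\<psi> ^^ K) d \<in> A"
    using psiA itA dA by auto
  have zD: "\<psi> d + (\<psi> ^^ (K + 1)) d \<in> D"
    by (rule itback[of _ "m+1"]) (use z0 D0 Aadd pdA xA in auto)
  have w0: "(\<psi> ^^ m) (d + (\<psi> ^^ K) d) = 0"
  proof -
    have "(\<psi> ^^ m) (d + (\<psi> ^^ K) d) = (\<psi> ^^ m) d + (\<psi> ^^ m) ((\<psi> ^^ K) d)"
      using itadd dA KdA by blast
    also have "(\<psi> ^^ m) ((\<psi> ^^ K) d) = (\<psi> ^^ (m + (m+1) * p)) d"
      unfolding K_def by (simp only: fca)
    also have "\<dots> = (\<psi> ^^ m) d" by (rule perj) simp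
    finally show ?thesis by (simp add: vec_self_add)
  qed
  have "d + (\<psi> ^^ K) d \<in> D"
    by (rule itback[of _ m]) (use w0 D0 Aadd dA KdA in auto)
  then have "d + (d + (\<psi> ^^ K) d) \<in> D" using Dadd dD by blast
  then have KD: "(\<psi> ^^ K) d \<in> D" by (simp add: add.assoc[symmetric] vec_self_add)
  have "(\<psi> ^^ (K - 1)) ((\<psi> ^^ (K + 1)) d) = (\<psi> ^^ (K + K)) d"
    by (simp only: fca, rule fpe) (use Km in simp)
  then have "(\<psi> ^^ (K - 1)) ((\<psi> ^^ (K + 1)) d) \<in> D" using KK KD by simp
  then have xD: "(\<psi> ^^ (K + 1)) d \<in> D" using itback xA by blast
  have "\<psi> d = (\<psi> d + (\<psi> ^^ (K + 1)) d) + (\<psi> ^^ (K + 1)) d"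
    by (simp add: add.assoc vec_self_add)
  then show ?thesis using Dadd zD xD by metis
qed

theorem mainTheorem1:
  fixes \<rho> :: "'n::finite F2vec \<Rightarrow> 'n F2vec"
    and U :: "('n F2vec \<times> 'n F2vec) set"
    and A B C D :: "'n F2vec set"
    and \<phi> :: "'n F2vec \<Rightarrow> 'n F2vec"
  assumes rho_sym: "bij \<rho>"
    and rho_not_affine: "\<rho> \<notin> AGL"
    and rho_zero: "\<rho> 0 = 0"
    and U_sub: "add_subgroup U"
    and A_sub: "add_subgroup A" and B_sub: "add_subgroup B"
    and C_sub: "add_subgroup C" and D_sub: "add_subgroup D"
    and phi_maps: "\<forall>a\<in>A. \<phi> a \<in> C"
    and phi_hom: "\<forall>a\<in>A. \<forall>b\<in>A. \<phi> (a + b) = \<phi> a + \<phi> b"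
    and U_eq: "U = {(a, \<phi> a + d) | a d. a \<in> A \<and> d \<in> D}"
    and block: "linear_block U (rho_bar \<rho>)"
  shows "D \<subseteq> A \<and> \<phi> ` A \<subseteq> A \<and> \<phi> ` D \<subseteq> D"
proof -
  have A0: "0 \<in> A" and Aadd: "\<And>x y. x \<in> A \<Longrightarrow> y \<in> A \<Longrightarrow> x + y \<in> A"
    using A_sub unfolding add_subgroup_def by auto
  have D0: "0 \<in> D" and Dadd: "\<And>x y. x \<in> D \<Longrightarrow> y \<in> D \<Longrightarrow> x + y \<in> D"
    using D_sub unfolding add_subgroup_def by auto
  have U0: "0 \<in> U" and Uadd: "\<And>x y. x \<in> U \<Longrightarrow> y \<in> U \<Longrightarrow> x + y \<in> U"
    using U_sub unfolding add_subgroup_def by auto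
  have memU: "(x, y) \<in> U \<longleftrightarrow> x \<in> A \<and> y - \<phi> x \<in> D" for x y
  proof
    assume "(x, y) \<in> U"
    then obtain d where "x \<in> A" "d \<in> D" "y = \<phi> x + d" using U_eq by auto
    then show "x \<in> A \<and> y - \<phi> x \<in> D" by simp
  next
    assume h: "x \<in> A \<and> y - \<phi> x \<in> D"
    have "y = \<phi> x + (y - \<phi> x)" by simp
    then show "(x, y) \<in> U" using U_eq h by blast
  qed
  have phi0: "\<phi> 0 = 0"
    using phi_hom A0 by (metis add.right_neutral add_left_imp_eq)
  have Uneg: "\<And>x. x \<in> U \<Longrightarrow> - x \<in> U"
    using U_sub unfolding add_subgroup_def by auto
  have diff: "rho_bar \<rho> (u + p) - rho_bar \<rho> p \<in> U" if "u \<in> U" for u p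
  proof -
    obtain q where q: "rho_bar \<rho> ` ((\<lambda>u. u + p) ` U) = (\<lambda>u. u + q) ` U"
      using block unfolding linear_block_def by blast
    have "rho_bar \<rho> p \<in> (\<lambda>u. u + q) ` U"
    proof -
      have "p \<in> (\<lambda>u. u + p) ` U" using U0 by force
      then show ?thesis using q by blast
    qed
    then obtain u0 where u0: "u0 \<in> U" "rho_bar \<rho> p = u0 + q" by blast
    have "rho_bar \<rho> (u + p) \<in> (\<lambda>u. u + q) ` U" using q that by blast
    then obtain u1 where u1: "u1 \<in> U" "rho_bar \<rho> (u + p) = u1 + q" by blast
    have "rho_bar \<rho> (u + p) - rho_bar \<rho> p = u1 + - u0"
      unfolding u0(2) u1(2) by simp
    then show ?thesis using u0 u1 Uadd Uneg by metis
  qed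
  have key: "a + \<phi> a + d \<in> A \<and> (\<phi> a + d + \<rho> (s + (a + \<phi> a + d)) - \<rho> s) - \<phi> (a + \<phi> a + d) \<in> D"
    if a: "a \<in> A" and d: "d \<in> D" for a d s
  proof -
    have uU: "(a, \<phi> a + d) \<in> U" using U_eq a d by blast
    have "rho_bar \<rho> ((a, \<phi> a + d) + (s, 0)) - rho_bar \<rho> (s, 0) =
          (a + \<phi> a + d, \<phi> a + d + \<rho> (s + (a + \<phi> a + d)) - \<rho> s)"
      by (simp add: rho_bar_def algebra_simps)
    then have "(a + \<phi> a + d, \<phi> a + d + \<rho> (s + (a + \<phi> a + d)) - \<rho> s) \<in> U"
      using diff[OF uU] by metis
    then show ?thesis using memU by blast
  qed
  have DA: "D \<subseteq> A"
  proof
    fix d assume d: "d \<in> D"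
    show "d \<in> A" using key[OF A0 d, of 0] phi0 by simp
  qed
  have phiA: "\<phi> a \<in> A" if a: "a \<in> A" for a
  proof -
    have "a + \<phi> a \<in> A" using key[OF a D0, of 0] by simp
    then have "a + (a + \<phi> a) \<in> A" using Aadd a by blast
    then show ?thesis by (simp add: add.assoc[symmetric] vec_self_add)
  qed
  define \<psi> where "\<psi> x = x + \<phi> x" for x
  have psiA: "\<forall>x\<in>A. \<psi> x \<in> A" using phiA Aadd unfolding \<psi>_def by blast
  have psi_add: "\<forall>x\<in>A. \<forall>y\<in>A. \<psi> (x + y) = \<psi> x + \<psi> y"
    using phi_hom unfolding \<psi>_def by (simp add: algebra_simps)
  have bk: "\<forall>x\<in>A. \<psi> x \<in> D \<longrightarrow> x \<in> D"
  proof (intro ballI impI)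
    fix x assume x: "x \<in> A" and e: "\<psi> x \<in> D"
    have w: "x + \<phi> x + \<psi> x = 0" unfolding \<psi>_def by (simp add: add.assoc[symmetric] vec_self_add)
    have "(\<phi> x + \<psi> x + \<rho> (0 + 0) - \<rho> 0) - \<phi> 0 \<in> D"
      using key[OF x e, of 0] unfolding w by simp
    then have "\<phi> x + \<psi> x \<in> D" by (simp add: phi0)
    then have "\<phi> x + \<psi> x + \<psi> x \<in> D" using Dadd e by blast
    then have "\<phi> x \<in> D" by (simp add: add.assoc vec_self_add)
    then have "\<psi> x + \<phi> x \<in> D" using Dadd e by blast
    then show "x \<in> D" unfolding \<psi>_def by (simp add: add.assoc vec_self_add)
  qed
  have "\<phi> d \<in> D" if d: "d \<in> D" for d
  proof -
    have "\<psi> d \<in> D" by (rule back_closure[OF psiA psi_add A_sub DA D_sub bk d])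
    then have "d + \<psi> d \<in> D" using Dadd d by blast
    then show ?thesis unfolding \<psi>_def by (simp add: add.assoc[symmetric] vec_self_add)
  qed
  then show ?thesis using DA phiA by blast
qed

end
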